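(* Let $k\ge4$ be even and let $(i,j\mid s,t)\in\mathcal{O}(\mathbb{C},k)$ be normalized, i.e. $0<i<j\le s<t\le k/2$. Then $j-i<t-s$, and consequently $j+s<i+t<k$.
   Context: $\phi=\exp(2\pi\mathrm{i}/k)$, $\mathbf{k}=\{1,\dots,k-1\}$, $\mathbf{k}_0=\{0,\dots,k-1\}$. A quadruple $(i,j\mid s,t)\in\mathbf{k}^4$ with $i\ne s$ is an overlap if $\phi^\omega(\phi^j-1)(\phi^s-1)=(\phi^i-1)(\phi^t-1)$ for some $\omega\in\mathbf{k}_0$; it is trivial if one of $i\equiv\pm j$, $j\equiv\pm t$, $t\equiv\pm s$, $s\equiv\pm i\pmod k$ holds, nontrivial otherwise. $\mathcal{O}(\mathbb{C},k)$ is the set of nontrivial overlaps. *)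

theory Defs
  imports Complex_Main "HOL-Number_Theory.Cong"
begin

definition phi :: "nat \<Rightarrow> complex" where
  "phi k = exp (2 * pi * \<i> / of_nat k)"

definition pm_cong :: "nat \<Rightarrow> nat \<Rightarrow> nat \<Rightarrow> bool" where
  "pm_cong k a b \<longleftrightarrow> [int a = int b] (mod int k) \<or> [int a = - int b] (mod int k)"

definition is_overlap :: "nat \<Rightarrow> nat \<Rightarrow> nat \<Rightarrow> nat \<Rightarrow> nat \<Rightarrow> bool" where
  "is_overlap k i j s t \<longleftrightarrow>
     i \<in> {1..k-1} \<and> j \<in> {1..k-1} \<and> s \<in> {1..k-1} \<and> t \<in> {1..k-1} \<and> i \<noteq> s \<and>
     (\<exists>\<omega>\<in>{0..k-1}. phi k ^ \<omega> * (phi k ^ j - 1) * (phi k ^ s - 1)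
                    = (phi k ^ i - 1) * (phi k ^ t - 1))"

definition trivial_overlap :: "nat \<Rightarrow> nat \<Rightarrow> nat \<Rightarrow> nat \<Rightarrow> nat \<Rightarrow> bool" where
  "trivial_overlap k i j s t \<longleftrightarrow>
     pm_cong k i j \<or> pm_cong k j t \<or> pm_cong k t s \<or> pm_cong k s i"

definition nontrivial_overlaps :: "nat \<Rightarrow> (nat \<times> nat \<times> nat \<times> nat) set" where
  "nontrivial_overlaps k = {(i,j,s,t). is_overlap k i j s t \<and> \<not> trivial_overlap k i j s t}"

end

theory Submission
  imports Defs
begin

lemma norm_cis_minus1: "cmod (cis x - 1) = 2 * \<bar>sin (x/2)\<bar>"
proof -
  have c: "cos x = 1 - 2 * sin (x/2) ^ 2" using cos_double_sin[of "x/2"] by simp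
  have s: "sin x = 2 * sin (x/2) * cos (x/2)" using sin_double[of "x/2"] by simp
  have cc: "sin (x/2)^2 + cos (x/2)^2 = 1" by (rule sin_cos_squared_add)
  have "(cos x - 1)^2 + (sin x)^2 = (2 * sin (x/2))^2"
    unfolding c s using cc by algebra
  moreover have "cmod (cis x - 1) = sqrt ((cos x - 1)^2 + (sin x)^2)"
    by (simp add: cmod_def)
  ultimately have "cmod (cis x - 1) = sqrt ((2 * sin (x/2))^2)" by (simp only:)
  then show ?thesis by (simp only: real_sqrt_abs abs_mult)
qed

lemma phi_pow: "phi k ^ a = cis (2 * pi * real a / real k)"
proof -
  have "phi k = cis (2 * pi / real k)" unfolding phi_def cis_conv_exp
    by (simp add: mult.commute)
  then show ?thesis by (simp add: DeMoivre mult_ac)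
qed

lemma norm_phi: "cmod (phi k ^ a - 1) = 2 * \<bar>sin (pi * real a / real k)\<bar>"
  unfolding phi_pow norm_cis_minus1 by simp

lemma sinprod_less:
  fixes A B C D :: real
  assumes "0 < A" "A < B" "B \<le> C" "C < D" "D \<le> pi/2" "A + D \<le> B + C"
  shows "sin A * sin D < sin B * sin C"
proof -
  have 1: "cos (D - A) < cos (C - B)"
    using assms by (intro cos_monotone_0_pi) auto
  have 2: "cos (B + C) \<le> cos (A + D)"
    using assms by (intro cos_monotone_0_pi_le) auto
  have "sin A * sin D = (cos (D - A) - cos (A + D)) / 2"
    using sin_times_sin[of D A] by (simp add: mult.commute add.commute)
  moreover have "sin B * sin C = (cos (C - B) - cos (B + C)) / 2"
    using sin_times_sin[of C B] by (simp add: mult.commute add.commute)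
  ultimately show ?thesis using 1 2 by simp
qed

theorem lemma23:
  fixes k i j s t :: nat
  assumes "k \<ge> 4" and "even k"
    and "(i, j, s, t) \<in> nontrivial_overlaps k"
    and "0 < i" and "i < j" and "j \<le> s" and "s < t" and "2 * t \<le> k"
  shows "j - i < t - s \<and> j + s < i + t \<and> i + t < k"
proof -
  from assms(3) obtain \<omega> where eq:
    "phi k ^ \<omega> * (phi k ^ j - 1) * (phi k ^ s - 1) = (phi k ^ i - 1) * (phi k ^ t - 1)"
    unfolding nontrivial_overlaps_def is_overlap_def by auto
  have n1: "cmod (phi k ^ \<omega>) = 1" unfolding phi_pow by simp
  from arg_cong[OF eq, of cmod] n1
  have "cmod (phi k ^ j - 1) * cmod (phi k ^ s - 1) = cmod (phi k ^ i - 1) * cmod (phi k ^ t - 1)"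
    by (simp add: norm_mult)
  hence "\<bar>sin (pi * j / k)\<bar> * \<bar>sin (pi * s / k)\<bar> = \<bar>sin (pi * i / k)\<bar> * \<bar>sin (pi * t / k)\<bar>"
    unfolding norm_phi by simp
  moreover have kp: "real k > 0" using assms(1) by simp
  have le: "pi * real a / real k \<le> pi / 2" if "a \<le> t" for a
  proof -
    have "2 * real a \<le> real k" using that assms(8) by linarith
    hence "pi * (2 * real a) \<le> pi * real k" by (simp add: mult_left_mono)
    thus ?thesis using kp by (simp add: field_simps)
  qed
  have ge: "0 \<le> pi * real a / real k" for a using kp by simp
  have ab: "\<bar>sin (pi * real a / real k)\<bar> = sin (pi * real a / real k)" if "a \<le> t" for a
  proof -
    have "pi * real a / real k \<le> pi" using le[OF that] pi_gt_zero by linarith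
    thus ?thesis using sin_ge_zero[OF ge, of a] by simp
  qed
  ultimately have E: "sin (pi * j / k) * sin (pi * s / k) = sin (pi * i / k) * sin (pi * t / k)"
    using assms by simp
  have main: "i + t > j + s"
  proof (rule ccontr)
    assume "\<not> ?thesis"
    hence h: "i + t \<le> j + s" by simp
    let ?f = "\<lambda>a::nat. pi * real a / real k"
    have lt: "?f a < ?f b" if "a < b" for a b
      using that kp by (simp add: divide_strict_right_mono)
    have "sin (?f i) * sin (?f t) < sin (?f j) * sin (?f s)"
    proof (rule sinprod_less)
      show "0 < ?f i" using assms(4) kp by simp
      show "?f i < ?f j" using lt assms by blast
      show "?f j \<le> ?f s" using assms(6) kp by (simp add: divide_right_mono)
      show "?f s < ?f t" using lt assms by blast
      show "?f t \<le> pi/2" using le by simp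
      have "real i + real t \<le> real j + real s" using h by linarith
      hence "pi * (real i + real t) / k \<le> pi * (real j + real s) / k"
        using kp by (simp add: divide_right_mono)
      thus "?f i + ?f t \<le> ?f j + ?f s" by (simp add: add_divide_distrib distrib_left)
    qed
    thus False using E by simp
  qed
  show ?thesis using main assms by auto
qed

end
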